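(* Let $S\subset\mathbb{R}^d$ be a nonempty compact convex set with diameter $D:=\sup_{x,y\in S}\|x-y\|$, and let $f$ be differentiable on $S$ with $L$-Lipschitz gradient on $S$. Let $G:=\sup_{x\in S}\|\nabla f(x)\|<\infty$ and fix $C\ge\max\{LD^2,\,GD\}$ with $C>0$. Let $\delta\ge0$ and suppose that for every $x\in S$ a vector $g_\delta(x)\in\mathbb{R}^d$ is available with \[ \big|\langle \nabla f(x)-g_\delta(x),\,s-x\rangle\big|\le\delta\,\|\nabla f(x)\|\quad\text{for all } s\in S. \] Let $\tilde{\mathcal G}(x):=\max_{s\in S}\langle g_\delta(x),\,x-s\rangle$. Given $x^0\in S$, define iterates for $k=0,1,2,\dots$ by choosing $s^k\in\arg\min_{s\in S}\langle g_\delta(x^k),\,s-x^k\rangle$, setting \[ \overline\alpha_k:=\frac{\big(\tilde{\mathcal G}(x^k)-\delta\|\nabla f(x^k)\|\big)_+}{C},\qquad x^{k+1}:=x^k+\overline\alpha_k(s^k-x^k), \] where $(u)_+:=\max\{u,0\}$. Then for every $k\ge0$, \[ f(x^{k+1})\le f(x^k)-\frac{\big(\tilde{\mathcal G}(x^k)-\delta\|\nabla f(x^k)\|\big)_+^2}{2C}. \]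
   Context: $\|\cdot\|$ is the Euclidean norm and $\langle\cdot,\cdot\rangle$ the Euclidean inner product. $f$ need not be convex. *)

theory Defs
  imports "HOL-Analysis.Analysis"
begin

definition fw_gap_tilde :: "('a::euclidean_space \<Rightarrow> 'a) \<Rightarrow> 'a set \<Rightarrow> 'a \<Rightarrow> real" where
  "fw_gap_tilde g S x = (SUP s\<in>S. g x \<bullet> (x - s))"

definition pos_part :: "real \<Rightarrow> real" where
  "pos_part u = max u 0"

end

theory Submission
  imports Defs
begin

lemma descent:
  fixes S :: "'a::euclidean_space set" and f :: "'a \<Rightarrow> real" and grad :: "'a \<Rightarrow> 'a"
  assumes cvx: "convex S" and xS: "x \<in> S" and yS: "y \<in> S"
    and f_diff: "\<And>y. y \<in> S \<Longrightarrow> (f has_derivative (\<lambda>h. grad y \<bullet> h)) (at y within S)"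
    and grad_lip: "\<And>y z. y \<in> S \<Longrightarrow> z \<in> S \<Longrightarrow> norm (grad y - grad z) \<le> L * norm (y - z)"
  shows "f y \<le> f x + grad x \<bullet> (y - x) + L / 2 * (norm (y - x))\<^sup>2"
proof -
  define d where "d = y - x"
  define p where "p t = x + t *\<^sub>R d" for t :: real
  have pS: "p t \<in> S" if "t \<in> {0..1}" for t
  proof -
    have "p t = (1 - t) *\<^sub>R x + t *\<^sub>R y" unfolding p_def d_def by (simp add: algebra_simps)
    thus ?thesis using that cvx xS yS by (auto simp: convex_alt)
  qed
  define \<psi> where "\<psi> t = f (p t) - f x - t * (grad x \<bullet> d) - L / 2 * t\<^sup>2 * (norm d)\<^sup>2" for t
  define \<psi>' where "\<psi>' t = (\<lambda>h. h * (grad (p t) \<bullet> d) - h * (grad x \<bullet> d) - h * (L * t * (norm d)\<^sup>2))" for t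
  have der: "(\<psi> has_derivative \<psi>' t) (at t within {0..1})" if "0 \<le> t" "t \<le> 1" for t
  proof -
    have pd: "(p has_derivative (\<lambda>h. h *\<^sub>R d)) (at t within {0..1})"
      unfolding p_def by (auto intro!: derivative_eq_intros)
    have fd: "((\<lambda>t. f (p t)) has_derivative (\<lambda>h. grad (p t) \<bullet> (h *\<^sub>R d))) (at t within {0..1})"
      by (rule has_derivative_in_compose2[OF f_diff _ _ pd]) (use pS that in auto)
    show ?thesis unfolding \<psi>_def \<psi>'_def
      by (rule derivative_eq_intros fd | simp)+ (auto simp: algebra_simps power2_eq_square)
  qed
  have "\<psi> 1 \<le> 0"
  proof -
    obtain t where t: "t \<in> {0<..<1}" "\<psi> 1 - \<psi> 0 = \<psi>' t (1 - 0)"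
      using mvt_simple[of 0 1 \<psi> \<psi>'] der by auto
    have pt: "p t - x = t *\<^sub>R d" unfolding p_def by simp
    have "(grad (p t) - grad x) \<bullet> d \<le> norm (grad (p t) - grad x) * norm d"
      by (rule norm_cauchy_schwarz)
    also have "\<dots> \<le> L * norm (p t - x) * norm d"
      using grad_lip[OF pS xS] t(1) by (intro mult_right_mono) auto
    also have "\<dots> = L * t * (norm d)\<^sup>2" using t(1) by (simp add: pt power2_eq_square)
    finally have "\<psi>' t 1 \<le> 0" unfolding \<psi>'_def by (simp add: inner_diff_left)
    moreover have "\<psi> 0 = 0" unfolding \<psi>_def p_def by simp
    ultimately show ?thesis using t by simp
  qed
  thus ?thesis unfolding \<psi>_def p_def d_def by simp
qed

theorem lemma3:
  fixes S :: "'a::euclidean_space set"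
    and f :: "'a \<Rightarrow> real"
    and grad g :: "'a \<Rightarrow> 'a"
    and L C \<delta> :: real
    and x s :: "nat \<Rightarrow> 'a"
  assumes S_nonempty: "S \<noteq> {}"
    and S_compact: "compact S"
    and S_convex: "convex S"
    and f_diff: "\<And>y. y \<in> S \<Longrightarrow> (f has_derivative (\<lambda>h. grad y \<bullet> h)) (at y within S)"
    and grad_lip: "\<And>y z. y \<in> S \<Longrightarrow> z \<in> S \<Longrightarrow> norm (grad y - grad z) \<le> L * norm (y - z)"
    and G_finite: "bdd_above ((\<lambda>y. norm (grad y)) ` S)"
    and C_ge: "C \<ge> max (L * (diameter S)\<^sup>2) ((SUP y\<in>S. norm (grad y)) * diameter S)"
    and C_pos: "C > 0"
    and delta_nonneg: "\<delta> \<ge> 0"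
    and g_approx: "\<And>y z. y \<in> S \<Longrightarrow> z \<in> S \<Longrightarrow>
                     \<bar>(grad y - g y) \<bullet> (z - y)\<bar> \<le> \<delta> * norm (grad y)"
    and x0: "x 0 \<in> S"
    and s_in: "\<And>k. s k \<in> S"
    and s_argmin: "\<And>k z. z \<in> S \<Longrightarrow> g (x k) \<bullet> (s k - x k) \<le> g (x k) \<bullet> (z - x k)"
    and x_step: "\<And>k. x (Suc k) = x k + (pos_part (fw_gap_tilde g S (x k) - \<delta> * norm (grad (x k))) / C) *\<^sub>R (s k - x k)"
  shows "\<forall>k. f (x (Suc k)) \<le> f (x k) - (pos_part (fw_gap_tilde g S (x k) - \<delta> * norm (grad (x k))))\<^sup>2 / (2 * C)"
proof -
  have bS: "bounded S" using S_compact by (rule compact_imp_bounded)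
  have step: "x (Suc k) \<in> S \<and> f (x (Suc k)) \<le> f (x k) - (pos_part (fw_gap_tilde g S (x k) - \<delta> * norm (grad (x k))))\<^sup>2 / (2 * C)"
    if xk: "x k \<in> S" for k
  proof -
    define xx where "xx = x k"
    define ss where "ss = s k"
    define P where "P = pos_part (fw_gap_tilde g S (x k) - \<delta> * norm (grad (x k)))"
    define D where "D = diameter S"
    define G where "G = (SUP y\<in>S. norm (grad y))"
    have xx: "xx \<in> S" and ss: "ss \<in> S" using xk s_in unfolding xx_def ss_def by auto
    have gap: "fw_gap_tilde g S (x k) = g xx \<bullet> (xx - ss)"
      unfolding fw_gap_tilde_def xx_def ss_def
    proof (rule cSup_eq_maximum)
      show "g (x k) \<bullet> (x k - s k) \<in> (\<lambda>z. g (x k) \<bullet> (x k - z)) ` S" using s_in by auto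
      show "y \<le> g (x k) \<bullet> (x k - s k)" if "y \<in> (\<lambda>z. g (x k) \<bullet> (x k - z)) ` S" for y
        using that s_argmin[of _ k] by (auto simp: inner_diff_right)
    qed
    have h1: "g xx \<bullet> (xx - ss) \<le> grad xx \<bullet> (xx - ss) + \<delta> * norm (grad xx)"
    proof -
      have "\<bar>(grad xx - g xx) \<bullet> (ss - xx)\<bar> \<le> \<delta> * norm (grad xx)" using g_approx[OF xx ss] .
      moreover have "(grad xx - g xx) \<bullet> (ss - xx) = g xx \<bullet> (xx - ss) - grad xx \<bullet> (xx - ss)"
        by (simp add: inner_diff_left inner_diff_right)
      ultimately show ?thesis by linarith
    qed
    have dD: "norm (ss - xx) \<le> D" unfolding D_def
      using diameter_bounded_bound[OF bS ss xx] by (simp add: dist_norm)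
    have gG: "norm (grad xx) \<le> G" unfolding G_def
      by (rule cSUP_upper[OF xx G_finite])
    have h2: "grad xx \<bullet> (xx - ss) \<le> C"
    proof -
      have "grad xx \<bullet> (xx - ss) \<le> norm (grad xx) * norm (xx - ss)" by (rule norm_cauchy_schwarz)
      also have "\<dots> \<le> G * D" using gG dD by (intro mult_mono) (auto simp: norm_minus_commute intro: order_trans[OF norm_ge_zero gG])
      also have "\<dots> \<le> C" using C_ge unfolding G_def D_def by simp
      finally show ?thesis .
    qed
    have P0: "0 \<le> P" unfolding P_def pos_part_def by simp
    have Pg: "P = 0 \<or> P \<le> grad xx \<bullet> (xx - ss)"
      unfolding P_def pos_part_def using gap h1 unfolding xx_def by auto
    have PC: "P \<le> C" using Pg h2 C_pos by auto
    have PP: "P * (grad xx \<bullet> (ss - xx)) \<le> - P\<^sup>2"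
    proof -
      have "grad xx \<bullet> (ss - xx) = - (grad xx \<bullet> (xx - ss))" by (simp add: inner_diff_right)
      thus ?thesis using Pg P0 by (auto simp: power2_eq_square mult_left_mono)
    qed
    have LC: "L * (norm (ss - xx))\<^sup>2 \<le> C"
    proof (cases "L \<ge> 0")
      case True
      have "L * (norm (ss - xx))\<^sup>2 \<le> L * D\<^sup>2"
        using dD True by (intro mult_left_mono power_mono) auto
      also have "\<dots> \<le> C" using C_ge unfolding D_def by simp
      finally show ?thesis .
    next
      case False
      hence "L * (norm (ss - xx))\<^sup>2 \<le> 0" by (simp add: mult_nonpos_nonneg)
      thus ?thesis using C_pos by simp
    qed
    define a where "a = P / C"
    have a01: "0 \<le> a" "a \<le> 1" unfolding a_def using P0 PC C_pos by auto
    have xs: "x (Suc k) = xx + a *\<^sub>R (ss - xx)" unfolding a_def P_def xx_def ss_def by (rule x_step)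
    have xsS: "x (Suc k) \<in> S"
    proof -
      have "x (Suc k) = (1 - a) *\<^sub>R xx + a *\<^sub>R ss" unfolding xs by (simp add: algebra_simps)
      thus ?thesis using a01 S_convex xx ss by (auto simp: convex_alt)
    qed
    have "f (x (Suc k)) \<le> f xx + grad xx \<bullet> (x (Suc k) - xx) + L / 2 * (norm (x (Suc k) - xx))\<^sup>2"
      by (rule descent[OF S_convex xx xsS f_diff grad_lip])
    also have "grad xx \<bullet> (x (Suc k) - xx) = P / C * (grad xx \<bullet> (ss - xx))"
      unfolding xs a_def by simp
    also have "L / 2 * (norm (x (Suc k) - xx))\<^sup>2 = P\<^sup>2 / (2 * C\<^sup>2) * (L * (norm (ss - xx))\<^sup>2)"
    proof -
      have "norm (x (Suc k) - xx) = P / C * norm (ss - xx)"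
        unfolding xs a_def using C_pos P0 by simp
      thus ?thesis by (simp add: power_mult_distrib power_divide)
    qed
    also have "P / C * (grad xx \<bullet> (ss - xx)) \<le> - P\<^sup>2 / C"
      using PP C_pos by (simp add: field_simps)
    also have "P\<^sup>2 / (2 * C\<^sup>2) * (L * (norm (ss - xx))\<^sup>2) \<le> P\<^sup>2 / (2 * C\<^sup>2) * C"
      using LC C_pos by (intro mult_left_mono) auto
    also have "f xx + - P\<^sup>2 / C + P\<^sup>2 / (2 * C\<^sup>2) * C = f xx - P\<^sup>2 / (2 * C)"
      using C_pos by (simp add: power2_eq_square field_simps)
    finally show ?thesis using xsS unfolding P_def xx_def by simp
  qed
  have xS: "x k \<in> S" for k
    by (induction k) (use x0 step in auto)
  show ?thesis using step xS by blast
qed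

end
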